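(* Consider the downlink clustered NOMA model and the problems $\mathcal{P}_1'$ and $\mathcal{P}_2'$ with Lagrangians $f$ and $g$ described in the context. Fix a precoder $\mathbf{P}^\star$, and choose the weights in $\mathcal{P}_2'$ as $$b_{k,i\to l}=\frac{1}{\varepsilon^{mmse}_{k,i\to l}}\quad\text{(evaluated at } \mathbf{P}^\star\text{)},\qquad 1\le l\le i\le L,\ 1\le k\le K,$$ and the thresholds as $\xi^{th}_{k,l}=1-R^{th}_{k,l}$. Then $\xi^{mmse}_{k,i\to l}=1-R_{k,i\to l}$ at $\mathbf{P}^\star$ for all $k$ and all $1\le l\le i\le L$. Moreover, $(\mathbf{P}^\star,\{R^\star_{k,l}\},c^\star,\mu,\kappa,\psi,\lambda)$ satisfies the KKT conditions of $\mathcal{P}_1'$ if and only if $(\mathbf{P}^\star,\{\xi^\star_{k,l}=1-R^\star_{k,l}\},\bar c^\star=L-c^\star,\bar\mu=\mu,\bar\kappa=\kappa,\bar\psi=\psi,\bar\lambda=\lambda)$ satisfies the KKT conditions of $\mathcal{P}_2'$. Consequently, the optimal precoders of the max-min fair sum rate problem $\mathcal{P}_1'$ and of the min-max fair weighted MMSE problem $\mathcal{P}_2'$ coincide at the optimal solution point.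
   Context: A base station with $M$ antennas serves $K$ clusters of $L$ single-antenna users each. User $i$ of cluster $k$ has channel row vector $\mathbf{h}_{k,i}\in\mathbb{C}^{1\times M}$. Power fractions satisfy $\alpha_{k,l}>0$, $\sum_{l=1}^L\alpha_{k,l}=1$. The precoder is $\mathbf{P}=[\mathbf{p}_1,\dots,\mathbf{p}_K]\in\mathbb{C}^{M\times K}$ with total power budget $E_{tx}>0$. For $1\le l\le i\le L$ define $r_{k,i\to l}=\sum_{j=l+1}^{L}\alpha_{k,j}|\mathbf{h}_{k,i}\mathbf{p}_k|^2+\sum_{t\ne k}|\mathbf{h}_{k,i}\mathbf{p}_t|^2+1$, $R_{k,i\to l}=\log\big(1+\alpha_{k,l}|\mathbf{h}_{k,i}\mathbf{p}_k|^2 r_{k,i\to l}^{-1}\big)$, $\varepsilon^{mmse}_{k,i\to l}=\big(\alpha_{k,l}^{-1}+|\mathbf{h}_{k,i}\mathbf{p}_k|^2 r_{k,i\to l}^{-1}\big)^{-1}$ (so that $R_{k,i\to l}=\log(\alpha_{k,l}/\varepsilon^{mmse}_{k,i\to l})$), and, for given weights $b_{k,i\to l}>0$, $\xi^{mmse}_{k,i\to l}=b_{k,i\to l}\varepsilon^{mmse}_{k,i\to l}-\log(\alpha_{k,l}b_{k,i\to l})$. Problem $\mathcal{P}_1'$: maximize $c$ over $\mathbf{P}$, $\{R_{k,l}\}$, $c$ subject to $c\le\sum_{l=1}^L R_{k,l}$ for all $k$; $R_{k,l}\le R_{k,i\to l}$ for all $k$ and $l\le i\le L$; $R^{th}_{k,l}\le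 R_{k,l}$ for all $k,l$ (given thresholds $R^{th}_{k,l}\ge0$); $\mathrm{Tr}(\mathbf{P}\mathbf{P}^H)\le E_{tx}$. Its Lagrangian is $f=-c+\sum_k\mu_k c-\sum_{k,l}\mu_k R_{k,l}+\sum_{k,l}\kappa_{k,l}(R^{th}_{k,l}-R_{k,l})+\lambda(\mathrm{Tr}(\mathbf{P}\mathbf{P}^H)-E_{tx})+\sum_{k}\sum_{l=1}^L\sum_{i=l}^L\psi_{k,i\to l}(R_{k,l}-R_{k,i\to l})$. Problem $\mathcal{P}_2'$ (weights $b_{k,i\to l}>0$ treated as fixed constants): minimize $\bar c$ over $\mathbf{P}$, $\{\xi_{k,l}\}$, $\bar c$ subject to $\sum_{l=1}^L\xi_{k,l}\le\bar c$ for all $k$; $\xi^{mmse}_{k,i\to l}\le\xi_{k,l}$ for all $k$ and $l\le i\le L$; $\xi_{k,l}\le\xi^{th}_{k,l}$ for all $k,l$; $\mathrm{Tr}(\mathbf{P}\mathbf{P}^H)\le E_{tx}$. Its Lagrangian is $g=\bar c-\sum_k\bar\mu_k\bar c+\sum_{k,l}\bar\mu_k\xi_{k,l}+\sum_{k,l}\bar\kappa_{k,l}(\xi_{k,l}-\xi^{th}_{k,l})+\bar\lambda(\mathrm{Tr}(\mathbf{P}\mathbf{P}^H)-E_{tx})+\sum_k\sum_{l=1}^L\sum_{i=l}^L\bar\psi_{k,i\to l}(\xi^{mmse}_{k,i\to l}-\xi_{k,l})$. KKT conditions: stationarity of the Lagrangian with respect to each $\mathbf{p}_k$ (complex gradient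 taken with respect to $\mathbf{p}_k^*$), with respect to the auxiliary scalar ($c$ or $\bar c$) and with respect to each $R_{k,l}$ (resp. $\xi_{k,l}$); primal feasibility; nonnegativity of all multipliers; and complementary slackness for every constraint. *)

theory Defs
  imports "HOL-Analysis.Analysis"
begin

(* Antenna index type 'm (finite, M = CARD('m)); clusters k \<in> {1..K}; users l \<in> {1..L}.
   Channels h k i :: complex^'m (row vector h_{k,i}); precoder P k :: complex^'m (column p_k).
   Triple-indexed quantities x_{k,i\<rightarrow>l} are written  x k i l. *)

definition hp :: "complex^'m \<Rightarrow> complex^'m \<Rightarrow> complex" where
  "hp hv pv = (\<Sum>j\<in>UNIV. hv$j * pv$j)"

definition gain :: "(nat \<Rightarrow> nat \<Rightarrow> complex^'m) \<Rightarrow> (nat \<Rightarrow> complex^'m) \<Rightarrow> nat \<Rightarrow> nat \<Rightarrow> nat \<Rightarrow> real" where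
  "gain h P k i t = (cmod (hp (h k i) (P t)))^2"

definition r_int :: "nat \<Rightarrow> nat \<Rightarrow> (nat \<Rightarrow> nat \<Rightarrow> real) \<Rightarrow> (nat \<Rightarrow> nat \<Rightarrow> complex^'m)
    \<Rightarrow> (nat \<Rightarrow> complex^'m) \<Rightarrow> nat \<Rightarrow> nat \<Rightarrow> nat \<Rightarrow> real" where
  "r_int K L \<alpha> h P k i l =
     (\<Sum>j\<in>{l+1..L}. \<alpha> k j) * gain h P k i k + (\<Sum>t\<in>{1..K}-{k}. gain h P k i t) + 1"

definition rate :: "nat \<Rightarrow> nat \<Rightarrow> (nat \<Rightarrow> nat \<Rightarrow> real) \<Rightarrow> (nat \<Rightarrow> nat \<Rightarrow> complex^'m)
    \<Rightarrow> (nat \<Rightarrow> complex^'m) \<Rightarrow> nat \<Rightarrow> nat \<Rightarrow> nat \<Rightarrow> real" where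
  "rate K L \<alpha> h P k i l = ln (1 + \<alpha> k l * gain h P k i k / r_int K L \<alpha> h P k i l)"

definition eps_mmse :: "nat \<Rightarrow> nat \<Rightarrow> (nat \<Rightarrow> nat \<Rightarrow> real) \<Rightarrow> (nat \<Rightarrow> nat \<Rightarrow> complex^'m)
    \<Rightarrow> (nat \<Rightarrow> complex^'m) \<Rightarrow> nat \<Rightarrow> nat \<Rightarrow> nat \<Rightarrow> real" where
  "eps_mmse K L \<alpha> h P k i l =
     inverse (inverse (\<alpha> k l) + gain h P k i k / r_int K L \<alpha> h P k i l)"

definition xi_mmse :: "nat \<Rightarrow> nat \<Rightarrow> (nat \<Rightarrow> nat \<Rightarrow> real) \<Rightarrow> (nat \<Rightarrow> nat \<Rightarrow> complex^'m)
    \<Rightarrow> (nat \<Rightarrow> nat \<Rightarrow> nat \<Rightarrow> real) \<Rightarrow> (nat \<Rightarrow> complex^'m) \<Rightarrow> nat \<Rightarrow> nat \<Rightarrow> nat \<Rightarrow> real" where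
  "xi_mmse K L \<alpha> h b P k i l =
     b k i l * eps_mmse K L \<alpha> h P k i l - ln (\<alpha> k l * b k i l)"

definition tr_pow :: "nat \<Rightarrow> (nat \<Rightarrow> complex^'m) \<Rightarrow> real" where
  "tr_pow K P = (\<Sum>k\<in>{1..K}. \<Sum>j\<in>UNIV. (cmod (P k $ j))^2)"

definition wirtinger_conj_grad :: "(complex^'m \<Rightarrow> real) \<Rightarrow> complex^'m \<Rightarrow> complex^'m" where
  "wirtinger_conj_grad F x =
     (\<chi> j. (complex_of_real (frechet_derivative F (at x) (axis j 1))
            + \<i> * complex_of_real (frechet_derivative F (at x) (axis j \<i>))) / 2)"

definition stationary_conj :: "(complex^'m \<Rightarrow> real) \<Rightarrow> complex^'m \<Rightarrow> bool" where
  "stationary_conj F x \<longleftrightarrow> F differentiable (at x) \<and> wirtinger_conj_grad F x = 0"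

definition lagr_f :: "nat \<Rightarrow> nat \<Rightarrow> (nat \<Rightarrow> nat \<Rightarrow> real) \<Rightarrow> (nat \<Rightarrow> nat \<Rightarrow> complex^'m)
    \<Rightarrow> real \<Rightarrow> (nat \<Rightarrow> nat \<Rightarrow> real)
    \<Rightarrow> (nat \<Rightarrow> complex^'m) \<Rightarrow> (nat \<Rightarrow> nat \<Rightarrow> real) \<Rightarrow> real
    \<Rightarrow> (nat \<Rightarrow> real) \<Rightarrow> (nat \<Rightarrow> nat \<Rightarrow> real) \<Rightarrow> (nat \<Rightarrow> nat \<Rightarrow> nat \<Rightarrow> real) \<Rightarrow> real \<Rightarrow> real" where
  "lagr_f K L \<alpha> h E Rth P R c mu kappa psi lam =
     - c + (\<Sum>k\<in>{1..K}. mu k * c)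
     - (\<Sum>k\<in>{1..K}. \<Sum>l\<in>{1..L}. mu k * R k l)
     + (\<Sum>k\<in>{1..K}. \<Sum>l\<in>{1..L}. kappa k l * (Rth k l - R k l))
     + lam * (tr_pow K P - E)
     + (\<Sum>k\<in>{1..K}. \<Sum>l\<in>{1..L}. \<Sum>i\<in>{l..L}. psi k i l * (R k l - rate K L \<alpha> h P k i l))"

text \<open>Lagrangian g of P2' (weights b fixed constants).\<close>
definition lagr_g :: "nat \<Rightarrow> nat \<Rightarrow> (nat \<Rightarrow> nat \<Rightarrow> real) \<Rightarrow> (nat \<Rightarrow> nat \<Rightarrow> complex^'m)
    \<Rightarrow> real \<Rightarrow> (nat \<Rightarrow> nat \<Rightarrow> nat \<Rightarrow> real) \<Rightarrow> (nat \<Rightarrow> nat \<Rightarrow> real)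
    \<Rightarrow> (nat \<Rightarrow> complex^'m) \<Rightarrow> (nat \<Rightarrow> nat \<Rightarrow> real) \<Rightarrow> real
    \<Rightarrow> (nat \<Rightarrow> real) \<Rightarrow> (nat \<Rightarrow> nat \<Rightarrow> real) \<Rightarrow> (nat \<Rightarrow> nat \<Rightarrow> nat \<Rightarrow> real) \<Rightarrow> real \<Rightarrow> real" where
  "lagr_g K L \<alpha> h E b xith P xi cb mu kappa psi lam =
     cb - (\<Sum>k\<in>{1..K}. mu k * cb)
     + (\<Sum>k\<in>{1..K}. \<Sum>l\<in>{1..L}. mu k * xi k l)
     + (\<Sum>k\<in>{1..K}. \<Sum>l\<in>{1..L}. kappa k l * (xi k l - xith k l))
     + lam * (tr_pow K P - E)
     + (\<Sum>k\<in>{1..K}. \<Sum>l\<in>{1..L}. \<Sum>i\<in>{l..L}. psi k i l * (xi_mmse K L \<alpha> h b P k i l - xi k l))"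

definition KKT1 :: "nat \<Rightarrow> nat \<Rightarrow> (nat \<Rightarrow> nat \<Rightarrow> real) \<Rightarrow> (nat \<Rightarrow> nat \<Rightarrow> complex^'m)
    \<Rightarrow> real \<Rightarrow> (nat \<Rightarrow> nat \<Rightarrow> real)
    \<Rightarrow> (nat \<Rightarrow> complex^'m) \<Rightarrow> (nat \<Rightarrow> nat \<Rightarrow> real) \<Rightarrow> real
    \<Rightarrow> (nat \<Rightarrow> real) \<Rightarrow> (nat \<Rightarrow> nat \<Rightarrow> real) \<Rightarrow> (nat \<Rightarrow> nat \<Rightarrow> nat \<Rightarrow> real) \<Rightarrow> real \<Rightarrow> bool" where
  "KKT1 K L \<alpha> h E Rth P R c mu kappa psi lam \<longleftrightarrow>
     \<comment> \<open>stationarity\<close>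
     (\<forall>k\<in>{1..K}. stationary_conj
        (\<lambda>q. lagr_f K L \<alpha> h E Rth (P(k := q)) R c mu kappa psi lam) (P k)) \<and>
     ((\<lambda>x. lagr_f K L \<alpha> h E Rth P R x mu kappa psi lam) has_real_derivative 0) (at c) \<and>
     (\<forall>k\<in>{1..K}. \<forall>l\<in>{1..L}.
        ((\<lambda>x. lagr_f K L \<alpha> h E Rth P (R(k := (R k)(l := x))) c mu kappa psi lam)
           has_real_derivative 0) (at (R k l))) \<and>
     \<comment> \<open>primal feasibility\<close>
     (\<forall>k\<in>{1..K}. c \<le> (\<Sum>l\<in>{1..L}. R k l)) \<and>
     (\<forall>k\<in>{1..K}. \<forall>l\<in>{1..L}. \<forall>i\<in>{l..L}. R k l \<le> rate K L \<alpha> h P k i l) \<and>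
     (\<forall>k\<in>{1..K}. \<forall>l\<in>{1..L}. Rth k l \<le> R k l) \<and>
     tr_pow K P \<le> E \<and>
     \<comment> \<open>dual feasibility\<close>
     (\<forall>k\<in>{1..K}. 0 \<le> mu k) \<and>
     (\<forall>k\<in>{1..K}. \<forall>l\<in>{1..L}. 0 \<le> kappa k l) \<and>
     (\<forall>k\<in>{1..K}. \<forall>l\<in>{1..L}. \<forall>i\<in>{l..L}. 0 \<le> psi k i l) \<and>
     0 \<le> lam \<and>
     \<comment> \<open>complementary slackness\<close>
     (\<forall>k\<in>{1..K}. mu k * (c - (\<Sum>l\<in>{1..L}. R k l)) = 0) \<and>
     (\<forall>k\<in>{1..K}. \<forall>l\<in>{1..L}. \<forall>i\<in>{l..L}. psi k i l * (R k l - rate K L \<alpha> h P k i l) = 0) \<and>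
     (\<forall>k\<in>{1..K}. \<forall>l\<in>{1..L}. kappa k l * (Rth k l - R k l) = 0) \<and>
     lam * (tr_pow K P - E) = 0"

definition KKT2 :: "nat \<Rightarrow> nat \<Rightarrow> (nat \<Rightarrow> nat \<Rightarrow> real) \<Rightarrow> (nat \<Rightarrow> nat \<Rightarrow> complex^'m)
    \<Rightarrow> real \<Rightarrow> (nat \<Rightarrow> nat \<Rightarrow> nat \<Rightarrow> real) \<Rightarrow> (nat \<Rightarrow> nat \<Rightarrow> real)
    \<Rightarrow> (nat \<Rightarrow> complex^'m) \<Rightarrow> (nat \<Rightarrow> nat \<Rightarrow> real) \<Rightarrow> real
    \<Rightarrow> (nat \<Rightarrow> real) \<Rightarrow> (nat \<Rightarrow> nat \<Rightarrow> real) \<Rightarrow> (nat \<Rightarrow> nat \<Rightarrow> nat \<Rightarrow> real) \<Rightarrow> real \<Rightarrow> bool" where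
  "KKT2 K L \<alpha> h E b xith P xi cb mu kappa psi lam \<longleftrightarrow>
     \<comment> \<open>stationarity\<close>
     (\<forall>k\<in>{1..K}. stationary_conj
        (\<lambda>q. lagr_g K L \<alpha> h E b xith (P(k := q)) xi cb mu kappa psi lam) (P k)) \<and>
     ((\<lambda>x. lagr_g K L \<alpha> h E b xith P xi x mu kappa psi lam) has_real_derivative 0) (at cb) \<and>
     (\<forall>k\<in>{1..K}. \<forall>l\<in>{1..L}.
        ((\<lambda>x. lagr_g K L \<alpha> h E b xith P (xi(k := (xi k)(l := x))) cb mu kappa psi lam)
           has_real_derivative 0) (at (xi k l))) \<and>
     \<comment> \<open>primal feasibility\<close>
     (\<forall>k\<in>{1..K}. (\<Sum>l\<in>{1..L}. xi k l) \<le> cb) \<and>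
     (\<forall>k\<in>{1..K}. \<forall>l\<in>{1..L}. \<forall>i\<in>{l..L}. xi_mmse K L \<alpha> h b P k i l \<le> xi k l) \<and>
     (\<forall>k\<in>{1..K}. \<forall>l\<in>{1..L}. xi k l \<le> xith k l) \<and>
     tr_pow K P \<le> E \<and>
     \<comment> \<open>dual feasibility\<close>
     (\<forall>k\<in>{1..K}. 0 \<le> mu k) \<and>
     (\<forall>k\<in>{1..K}. \<forall>l\<in>{1..L}. 0 \<le> kappa k l) \<and>
     (\<forall>k\<in>{1..K}. \<forall>l\<in>{1..L}. \<forall>i\<in>{l..L}. 0 \<le> psi k i l) \<and>
     0 \<le> lam \<and>
     \<comment> \<open>complementary slackness\<close>
     (\<forall>k\<in>{1..K}. mu k * ((\<Sum>l\<in>{1..L}. xi k l) - cb) = 0) \<and>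
     (\<forall>k\<in>{1..K}. \<forall>l\<in>{1..L}. \<forall>i\<in>{l..L}. psi k i l * (xi_mmse K L \<alpha> h b P k i l - xi k l) = 0) \<and>
     (\<forall>k\<in>{1..K}. \<forall>l\<in>{1..L}. kappa k l * (xi k l - xith k l) = 0) \<and>
     lam * (tr_pow K P - E) = 0"

end

theory Submission
  imports Defs
begin

lemma hp_diff: "(\<lambda>q. hp v q) differentiable (at q0)"
  unfolding hp_def
  by (intro differentiable_sum ballI differentiable_mult differentiable_const
        bounded_linear_imp_differentiable[OF bounded_linear_vec_nth]) auto

lemma cmod_sq_diff: "(\<lambda>q. (cmod (hp v q))^2) differentiable (at q0)"
  unfolding power2_norm_eq_inner
  by (intro differentiable_inner hp_diff)

lemma gain_upd_diff: "(\<lambda>q. gain h (P(k:=q)) k' i t) differentiable (at q0)"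
  unfolding gain_def
  by (cases "t = k") (auto intro: cmod_sq_diff)

lemma r_int_upd_diff: "(\<lambda>q. r_int K L \<alpha> h (P(k:=q)) k' i l) differentiable (at q0)"
  unfolding r_int_def
  by (intro differentiable_add differentiable_mult differentiable_const differentiable_sum
       ballI gain_upd_diff finite_Diff finite_atLeastAtMost)

lemma r_int_ge1:
  assumes "0 \<le> (\<Sum>j\<in>{l+1..L}. \<alpha> k' j)"
  shows "1 \<le> r_int K L \<alpha> h P k' i l"
  using assms
proof -
  have "0 \<le> (\<Sum>j\<in>{l+1..L}. \<alpha> k' j) * gain h P k' i k'"
    using assms by (simp add: gain_def)
  moreover have "0 \<le> (\<Sum>t\<in>{1..K}-{k'}. gain h P k' i t)"
    by (intro sum_nonneg) (simp add: gain_def)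
  ultimately show ?thesis unfolding r_int_def by linarith
qed

lemma psi_deriv0:
  assumes a: "0 < a" and x0: "0 \<le> x0" and b0: "b0 = 1 / inverse (inverse a + x0)"
  shows "((\<lambda>x. b0 * inverse (inverse a + x) - ln (a * b0) + ln (1 + a * x) - 1)
           has_real_derivative 0) (at x0)"
proof -
  have p1: "0 < inverse a + x0" using a x0 by (simp add: add_pos_nonneg)
  have p2: "0 < 1 + a * x0" using a x0 by (simp add: add_pos_nonneg)
  have b0': "b0 = inverse a + x0" using b0 p1 by (simp add: divide_inverse)
  show ?thesis
    apply (rule DERIV_cong)
     apply (auto intro!: derivative_eq_intros simp: p1 p2)[1]
    apply (unfold b0')
    using p1 apply simp
    subgoal proof -
      have e: "1 / (1 + a * x0) * a = inverse (inverse a + x0)"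
        using a p2 by (simp add: field_simps)
      show ?thesis using p1 e by simp
    qed
    done
qed

lemma term_deriv0:
  assumes a: "0 < \<alpha> k' l" and s: "0 \<le> (\<Sum>j\<in>{l+1..L}. \<alpha> k' j)"
    and b: "b k' i l = 1 / eps_mmse K L \<alpha> h P k' i l"
  shows "((\<lambda>q. xi_mmse K L \<alpha> h b (P(k:=q)) k' i l + rate K L \<alpha> h (P(k:=q)) k' i l - 1)
           has_derivative (\<lambda>_. 0)) (at (P k))"
proof -
  define u where "u q = gain h (P(k:=q)) k' i k' / r_int K L \<alpha> h (P(k:=q)) k' i l" for q
  have r1: "1 \<le> r_int K L \<alpha> h (P(k:=q)) k' i l" for q using s by (rule r_int_ge1)
  have ud: "u differentiable (at (P k))"
    unfolding u_def
    by (rule differentiable_divide[OF gain_upd_diff r_int_upd_diff]) (use r1[of "P k"] in linarith)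
  then obtain u' where u': "(u has_derivative u') (at (P k))"
    unfolding differentiable_def by blast
  define x0 where "x0 = u (P k)"
  have x0: "0 \<le> x0" unfolding x0_def u_def using r1[of "P k"]
    by (intro divide_nonneg_pos) (auto simp: gain_def)
  have b0: "b k' i l = 1 / inverse (inverse (\<alpha> k' l) + x0)"
    using b unfolding x0_def u_def eps_mmse_def by simp
  define \<Psi> where "\<Psi> x = b k' i l * inverse (inverse (\<alpha> k' l) + x) - ln (\<alpha> k' l * b k' i l)
      + ln (1 + \<alpha> k' l * x) - 1" for x
  have eq: "xi_mmse K L \<alpha> h b (P(k:=q)) k' i l + rate K L \<alpha> h (P(k:=q)) k' i l - 1 = \<Psi> (u q)" for q
    unfolding \<Psi>_def u_def xi_mmse_def eps_mmse_def rate_def by simp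
  have D: "(\<Psi> has_real_derivative 0) (at x0)"
    unfolding \<Psi>_def by (rule psi_deriv0[OF a x0 b0])
  have z: "(\<lambda>x. (0::real) * x) = (\<lambda>x. 0)" by simp
  have D': "(\<Psi> has_derivative (\<lambda>x. 0)) (at (u (P k)))"
    using D unfolding has_field_derivative_def x0_def z .
  have "((\<lambda>q. \<Psi> (u q)) has_derivative (\<lambda>x. 0)) (at (P k))"
    by (rule has_derivative_compose[OF u' D'])
  then show ?thesis unfolding eq by simp
qed

definition Wfun where
  "Wfun K L \<alpha> h b xith Rth mu kappa psi P =
     real L - (\<Sum>k\<in>{1..K}. mu k * real L) + (\<Sum>k\<in>{1..K}. \<Sum>l\<in>{1..L}. mu k)
     + (\<Sum>k\<in>{1..K}. \<Sum>l\<in>{1..L}. kappa k l * (1 - xith k l - Rth k l))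
     + (\<Sum>k\<in>{1..K}. \<Sum>l\<in>{1..L}. \<Sum>i\<in>{l..L}. psi k i l *
          (xi_mmse K L \<alpha> h b P k i l + rate K L \<alpha> h P k i l - 1))"

lemma key:
  "lagr_g K L \<alpha> h E b xith P (\<lambda>k l. 1 - R k l) (real L - c) mu kappa psi lam
   = lagr_f K L \<alpha> h E Rth P R c mu kappa psi lam + Wfun K L \<alpha> h b xith Rth mu kappa psi P"
proof -
  have e1: "(\<Sum>k\<in>{1..K}. mu k * (real L - c)) = (\<Sum>k\<in>{1..K}. mu k * real L) - (\<Sum>k\<in>{1..K}. mu k * c)"
    by (simp add: sum_subtractf[symmetric] right_diff_distrib)
  have e2: "(\<Sum>k\<in>{1..K}. \<Sum>l\<in>{1..L}. mu k * (1 - R k l)) =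
     (\<Sum>k\<in>{1..K}. \<Sum>l\<in>{1..L}. mu k) - (\<Sum>k\<in>{1..K}. \<Sum>l\<in>{1..L}. mu k * R k l)"
    by (simp only: right_diff_distrib mult_1_right sum_subtractf)
  have e3: "(\<Sum>k\<in>{1..K}. \<Sum>l\<in>{1..L}. kappa k l * (1 - R k l - xith k l)) =
     (\<Sum>k\<in>{1..K}. \<Sum>l\<in>{1..L}. kappa k l * (Rth k l - R k l)) +
     (\<Sum>k\<in>{1..K}. \<Sum>l\<in>{1..L}. kappa k l * (1 - xith k l - Rth k l))"
    by (simp add: sum.distrib[symmetric] algebra_simps)
  have e4: "(\<Sum>k\<in>{1..K}. \<Sum>l\<in>{1..L}. \<Sum>i\<in>{l..L}. psi k i l * (xi_mmse K L \<alpha> h b P k i l - (1 - R k l))) =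
     (\<Sum>k\<in>{1..K}. \<Sum>l\<in>{1..L}. \<Sum>i\<in>{l..L}. psi k i l * (R k l - rate K L \<alpha> h P k i l)) +
     (\<Sum>k\<in>{1..K}. \<Sum>l\<in>{1..L}. \<Sum>i\<in>{l..L}. psi k i l *
          (xi_mmse K L \<alpha> h b P k i l + rate K L \<alpha> h P k i l - 1))"
    by (simp add: sum.distrib[symmetric] algebra_simps)
  show ?thesis
    unfolding lagr_f_def lagr_g_def Wfun_def e1 e2 e3 e4
    by (simp add: sum_distrib_right[symmetric])
qed

lemma sum_deriv0:
  assumes "\<And>i. i \<in> I \<Longrightarrow> (f i has_derivative (\<lambda>_. 0)) F"
  shows "((\<lambda>x. \<Sum>i\<in>I. f i x) has_derivative (\<lambda>_. 0)) F"
  using has_derivative_sum[of I f "\<lambda>i _. 0" F, OF assms] by simp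

lemma W_deriv0:
  assumes ap: "\<forall>k\<in>{1..K}. \<forall>l\<in>{1..L}. 0 < \<alpha> k l"
    and bc: "\<forall>k\<in>{1..K}. \<forall>l\<in>{1..L}. \<forall>i\<in>{l..L}. b k i l = 1 / eps_mmse K L \<alpha> h P k i l"
  shows "((\<lambda>q. Wfun K L \<alpha> h b xith Rth mu kappa psi (P(k:=q))) has_derivative (\<lambda>_. 0)) (at (P k))"
proof -
  have T: "((\<lambda>q. \<Sum>k'\<in>{1..K}. \<Sum>l\<in>{1..L}. \<Sum>i\<in>{l..L}. psi k' i l *
          (xi_mmse K L \<alpha> h b (P(k:=q)) k' i l + rate K L \<alpha> h (P(k:=q)) k' i l - 1))
        has_derivative (\<lambda>_. 0)) (at (P k))"
  proof (intro sum_deriv0)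
    fix k' l i assume k': "k' \<in> {1..K}" and l: "l \<in> {1..L}" and i: "i \<in> {l..L}"
    have a: "0 < \<alpha> k' l" using ap k' l by blast
    have s: "0 \<le> (\<Sum>j\<in>{l+1..L}. \<alpha> k' j)"
      using ap k' l by (intro sum_nonneg) (auto intro: less_imp_le)
    have b: "b k' i l = 1 / eps_mmse K L \<alpha> h P k' i l" using bc k' l i by blast
    show "((\<lambda>q. psi k' i l * (xi_mmse K L \<alpha> h b (P(k:=q)) k' i l + rate K L \<alpha> h (P(k:=q)) k' i l - 1))
        has_derivative (\<lambda>_. 0)) (at (P k))"
      using has_derivative_mult_right[OF term_deriv0[where \<alpha>=\<alpha> and k'=k' and l=l and L=L and b=b and i=i and K=K and h=h and P=P and k=k, OF a s b], of "psi k' i l"] by simp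
  qed
  show ?thesis unfolding Wfun_def
    using has_derivative_add[OF has_derivative_const T] by simp
qed

lemma stat_transfer:
  assumes GF: "\<And>q. G q = F q + D q" and D: "(D has_derivative (\<lambda>_. 0)) (at x)"
  shows "stationary_conj G x \<longleftrightarrow> stationary_conj F x"
proof -
  have G: "G = (\<lambda>q. F q + D q)" using GF by auto
  have F: "F = (\<lambda>q. G q - D q)" using GF by auto
  have diff: "G differentiable (at x) \<longleftrightarrow> F differentiable (at x)"
  proof
    assume "G differentiable (at x)"
    then obtain G' where "(G has_derivative G') (at x)" unfolding differentiable_def by blast
    from has_derivative_diff[OF this D] show "F differentiable (at x)"
      unfolding F differentiable_def by blast
  next
    assume "F differentiable (at x)"
    then obtain F' where "(F has_derivative F') (at x)" unfolding differentiable_def by blast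
    from has_derivative_add[OF this D] show "G differentiable (at x)"
      unfolding G differentiable_def by blast
  qed
  have fd: "frechet_derivative G (at x) = frechet_derivative F (at x)" if Fd: "F differentiable (at x)"
  proof -
    obtain F' where F': "(F has_derivative F') (at x)" using Fd unfolding differentiable_def by blast
    have "(G has_derivative (\<lambda>h. F' h + 0)) (at x)"
      unfolding G by (rule has_derivative_add[OF F' D])
    then have "(G has_derivative F') (at x)" by simp
    then show ?thesis using frechet_derivative_at F' by metis
  qed
  show ?thesis unfolding stationary_conj_def wirtinger_conj_grad_def
    using diff fd by auto
qed

lemma reflect0:
  assumes "\<And>x. g x = f (a - x) + C" and "(f has_real_derivative 0) (at (a - y))"
  shows "(g has_real_derivative 0) (at y)"
proof -
  have g: "g = (\<lambda>x. f (a - x) + C)" using assms(1) by auto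
  have "((\<lambda>x. a - x) has_real_derivative -1) (at y)"
    by (auto intro!: derivative_eq_intros)
  from DERIV_chain2[OF assms(2) this] have "((\<lambda>x. f (a - x)) has_real_derivative 0) (at y)" by simp
  from DERIV_add[OF this DERIV_const[of C]] show ?thesis unfolding g by simp
qed

lemma reflect_iff:
  assumes "\<And>x. g x = f (a - x) + C"
  shows "(g has_real_derivative 0) (at y) \<longleftrightarrow> (f has_real_derivative 0) (at (a - y))"
proof
  assume h: "(f has_real_derivative 0) (at (a - y))"
  show "(g has_real_derivative 0) (at y)" by (rule reflect0[of g f a C y, OF assms h])
next
  assume *: "(g has_real_derivative 0) (at y)"
  have "f x = g (a - x) + (- C)" for x using assms[of "a - x"] by simp
  from reflect0[of f g a "- C" "a - y", OF this] * show "(f has_real_derivative 0) (at (a - y))"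
    by simp
qed

lemma part1:
  assumes a: "0 < \<alpha> k l" and s: "0 \<le> (\<Sum>j\<in>{l+1..L}. \<alpha> k j)"
    and b: "b k i l = 1 / eps_mmse K L \<alpha> h P k i l"
  shows "xi_mmse K L \<alpha> h b P k i l = 1 - rate K L \<alpha> h P k i l"
proof -
  define x0 where "x0 = gain h P k i k / r_int K L \<alpha> h P k i l"
  have r1: "1 \<le> r_int K L \<alpha> h P k i l" using s by (rule r_int_ge1)
  have x0: "0 \<le> x0" unfolding x0_def using r1
    by (intro divide_nonneg_pos) (auto simp: gain_def)
  have p1: "0 < inverse (\<alpha> k l) + x0" using a x0 by (simp add: add_pos_nonneg)
  have e: "eps_mmse K L \<alpha> h P k i l = inverse (inverse (\<alpha> k l) + x0)"
    unfolding eps_mmse_def x0_def ..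
  have b': "b k i l = inverse (\<alpha> k l) + x0" using b p1 unfolding e by (simp add: divide_inverse)
  have r: "rate K L \<alpha> h P k i l = ln (1 + \<alpha> k l * x0)"
    unfolding rate_def x0_def by simp
  have ab: "\<alpha> k l * b k i l = 1 + \<alpha> k l * x0" unfolding b' using a by (simp add: field_simps)
  show ?thesis unfolding xi_mmse_def r ab unfolding e b' using p1 by simp
qed

theorem mainTheorem1:
  fixes K L :: nat
    and \<alpha> :: "nat \<Rightarrow> nat \<Rightarrow> real"
    and h :: "nat \<Rightarrow> nat \<Rightarrow> complex^'m"
    and E :: real
    and Rth :: "nat \<Rightarrow> nat \<Rightarrow> real"
    and Pstar :: "nat \<Rightarrow> complex^'m"
    and b :: "nat \<Rightarrow> nat \<Rightarrow> nat \<Rightarrow> real"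
    and xith :: "nat \<Rightarrow> nat \<Rightarrow> real"
  assumes K_pos: "1 \<le> K" and L_pos: "1 \<le> L"
    and alpha_pos: "\<forall>k\<in>{1..K}. \<forall>l\<in>{1..L}. 0 < \<alpha> k l"
    and alpha_sum: "\<forall>k\<in>{1..K}. (\<Sum>l\<in>{1..L}. \<alpha> k l) = 1"
    and E_pos: "0 < E"
    and Rth_nonneg: "\<forall>k\<in>{1..K}. \<forall>l\<in>{1..L}. 0 \<le> Rth k l"
    and b_choice: "\<forall>k\<in>{1..K}. \<forall>l\<in>{1..L}. \<forall>i\<in>{l..L}.
                     b k i l = 1 / eps_mmse K L \<alpha> h Pstar k i l"
    and xith_choice: "\<forall>k\<in>{1..K}. \<forall>l\<in>{1..L}. xith k l = 1 - Rth k l"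
  shows "(\<forall>k\<in>{1..K}. \<forall>l\<in>{1..L}. \<forall>i\<in>{l..L}.
            xi_mmse K L \<alpha> h b Pstar k i l = 1 - rate K L \<alpha> h Pstar k i l) \<and>
         (\<forall>R c mu kappa psi lam.
            KKT1 K L \<alpha> h E Rth Pstar R c mu kappa psi lam \<longleftrightarrow>
            KKT2 K L \<alpha> h E b xith Pstar (\<lambda>k l. 1 - R k l) (real L - c) mu kappa psi lam)"
proof -
  have s: "0 \<le> (\<Sum>j\<in>{l+1..L}. \<alpha> k j)" if "k \<in> {1..K}" for k l
    using alpha_pos that by (intro sum_nonneg) (auto intro: less_imp_le)
  have P1: "xi_mmse K L \<alpha> h b Pstar k i l = 1 - rate K L \<alpha> h Pstar k i l"
    if "k \<in> {1..K}" "l \<in> {1..L}" "i \<in> {l..L}" for k l i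
    by (rule part1) (use alpha_pos b_choice that s in auto)
  have Wd: "((\<lambda>q. Wfun K L \<alpha> h b xith Rth mu kappa psi (Pstar(k:=q))) has_derivative (\<lambda>_. 0)) (at (Pstar k))"
    for k mu kappa psi
    by (rule W_deriv0[OF alpha_pos b_choice])
  show ?thesis
  proof (intro conjI allI)
    show "\<forall>k\<in>{1..K}. \<forall>l\<in>{1..L}. \<forall>i\<in>{l..L}.
            xi_mmse K L \<alpha> h b Pstar k i l = 1 - rate K L \<alpha> h Pstar k i l"
      using P1 by blast
  next
    fix R c mu kappa psi lam
    let ?W = "Wfun K L \<alpha> h b xith Rth mu kappa psi Pstar"
    have S1: "stationary_conj (\<lambda>q. lagr_g K L \<alpha> h E b xith (Pstar(k := q)) (\<lambda>k l. 1 - R k l) (real L - c) mu kappa psi lam) (Pstar k)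
        \<longleftrightarrow> stationary_conj (\<lambda>q. lagr_f K L \<alpha> h E Rth (Pstar(k := q)) R c mu kappa psi lam) (Pstar k)" for k
      by (rule stat_transfer[OF key Wd])
    have S2: "((\<lambda>x. lagr_g K L \<alpha> h E b xith Pstar (\<lambda>k l. 1 - R k l) x mu kappa psi lam) has_real_derivative 0) (at (real L - c))
        \<longleftrightarrow> ((\<lambda>x. lagr_f K L \<alpha> h E Rth Pstar R x mu kappa psi lam) has_real_derivative 0) (at c)"
    proof -
      have "lagr_g K L \<alpha> h E b xith Pstar (\<lambda>k l. 1 - R k l) x mu kappa psi lam
          = lagr_f K L \<alpha> h E Rth Pstar R (real L - x) mu kappa psi lam + ?W" for x
        using key[of K L \<alpha> h E b xith Pstar R "real L - x"] by simp
      from reflect_iff[of "\<lambda>x. lagr_g K L \<alpha> h E b xith Pstar (\<lambda>k l. 1 - R k l) x mu kappa psi lam"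
          "\<lambda>x. lagr_f K L \<alpha> h E Rth Pstar R x mu kappa psi lam" "real L" ?W "real L - c", OF this]
      show ?thesis by simp
    qed
    have S3: "((\<lambda>x. lagr_g K L \<alpha> h E b xith Pstar ((\<lambda>k l. 1 - R k l)(k := (\<lambda>l. 1 - R k l)(l := x))) (real L - c) mu kappa psi lam)
           has_real_derivative 0) (at (1 - R k l))
        \<longleftrightarrow> ((\<lambda>x. lagr_f K L \<alpha> h E Rth Pstar (R(k := (R k)(l := x))) c mu kappa psi lam)
           has_real_derivative 0) (at (R k l))" for k l
    proof -
      have "lagr_g K L \<alpha> h E b xith Pstar ((\<lambda>k l. 1 - R k l)(k := (\<lambda>l. 1 - R k l)(l := x))) (real L - c) mu kappa psi lam
          = lagr_f K L \<alpha> h E Rth Pstar (R(k := (R k)(l := 1 - x))) c mu kappa psi lam + ?W" for x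
      proof -
        have "(\<lambda>k l. 1 - R k l)(k := (\<lambda>l. 1 - R k l)(l := x)) = (\<lambda>k' l'. 1 - (R(k := (R k)(l := 1 - x))) k' l')"
          by (auto simp: fun_eq_iff)
        then show ?thesis using key[of K L \<alpha> h E b xith Pstar "R(k := (R k)(l := 1 - x))" c] by simp
      qed
      from reflect_iff[of "\<lambda>x. lagr_g K L \<alpha> h E b xith Pstar ((\<lambda>k l. 1 - R k l)(k := (\<lambda>l. 1 - R k l)(l := x))) (real L - c) mu kappa psi lam"
          "\<lambda>x. lagr_f K L \<alpha> h E Rth Pstar (R(k := (R k)(l := x))) c mu kappa psi lam" 1 ?W "1 - R k l", OF this]
      show ?thesis by simp
    qed
    have sumeq: "(\<Sum>l\<in>{1..L}. 1 - R k l) = real L - (\<Sum>l\<in>{1..L}. R k l)" for k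
      by (simp add: sum_subtractf)
    show "KKT1 K L \<alpha> h E Rth Pstar R c mu kappa psi lam \<longleftrightarrow>
          KKT2 K L \<alpha> h E b xith Pstar (\<lambda>k l. 1 - R k l) (real L - c) mu kappa psi lam"
    proof -
      have E1: "(\<forall>k\<in>{1..K}. real L - (\<Sum>l\<in>{1..L}. R k l) \<le> real L - c) \<longleftrightarrow> (\<forall>k\<in>{1..K}. c \<le> (\<Sum>l\<in>{1..L}. R k l))"
        by auto
      have E2: "(\<forall>k\<in>{1..K}. \<forall>l\<in>{1..L}. \<forall>i\<in>{l..L}. xi_mmse K L \<alpha> h b Pstar k i l \<le> 1 - R k l)
         \<longleftrightarrow> (\<forall>k\<in>{1..K}. \<forall>l\<in>{1..L}. \<forall>i\<in>{l..L}. R k l \<le> rate K L \<alpha> h Pstar k i l)"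
        using P1 by auto
      have E3: "(\<forall>k\<in>{1..K}. \<forall>l\<in>{1..L}. 1 - R k l \<le> xith k l) \<longleftrightarrow> (\<forall>k\<in>{1..K}. \<forall>l\<in>{1..L}. Rth k l \<le> R k l)"
        using xith_choice by auto
      have E4: "(\<forall>k\<in>{1..K}. mu k * (real L - (\<Sum>l\<in>{1..L}. R k l) - (real L - c)) = 0)
         \<longleftrightarrow> (\<forall>k\<in>{1..K}. mu k * (c - (\<Sum>l\<in>{1..L}. R k l)) = 0)"
        by auto
      have E5: "(\<forall>k\<in>{1..K}. \<forall>l\<in>{1..L}. \<forall>i\<in>{l..L}. psi k i l * (xi_mmse K L \<alpha> h b Pstar k i l - (1 - R k l)) = 0)
         \<longleftrightarrow> (\<forall>k\<in>{1..K}. \<forall>l\<in>{1..L}. \<forall>i\<in>{l..L}. psi k i l * (R k l - rate K L \<alpha> h Pstar k i l) = 0)"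
        using P1 by auto
      have E6: "(\<forall>k\<in>{1..K}. \<forall>l\<in>{1..L}. kappa k l * (1 - R k l - xith k l) = 0)
         \<longleftrightarrow> (\<forall>k\<in>{1..K}. \<forall>l\<in>{1..L}. kappa k l * (Rth k l - R k l) = 0)"
        using xith_choice by auto
      show ?thesis
        unfolding KKT1_def KKT2_def S1 S2 S3 sumeq E1 E2 E3 E4 E5 E6
        by blast
    qed
  qed
qed

end
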